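(* Consider $n$ single photons, one in each of $n$ modes, whose joint state is $\rho^{\otimes n}$ where each photon's state is $\rho=(1-\epsilon)\rho_{\mathrm{id}}+\epsilon\rho_{\mathrm{dist}}$ in the orthogonal-bad-bit model. Then the probability of obtaining a valid pattern after the $n$-mode Fourier interferometer followed by photon-number-resolving detection is $$\Big(1-\frac1n\Big)(1-\epsilon)^n+\frac1n.$$
   Context: Orthogonal-bad-bit (OBB) model: with probability $1-\epsilon$ a photon is in a fixed common internal state ($\rho_{\mathrm{id}}$, identical for all photons), and with probability $\epsilon$ it is in an internal state ($\rho_{\mathrm{dist}}$) orthogonal to the internal states of all other photons. Modes are labelled $0,\dots,n-1$; the Fourier interferometer acts on external modes only via $\hat a_r^\dagger[\xi]\mapsto\frac1{\sqrt n}\sum_{j=0}^{n-1}\omega^{-rj}\hat a_j^\dagger[\xi]$, $\omega=e^{2\pi i/n}$, where $\hat a_i^\dagger[\xi]$ creates a photon in mode $i$ with internal state $\xi$. Detectors resolve photon number per external mode but not internal states. A pattern $(s_0,\dots,s_{n-1})$ is valid if $\sum_i i\,s_i\equiv0\pmod n$. *)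

theory Defs
  imports Complex_Main "HOL-Library.FuncSet"
begin

text \<open>Modes and photons are labelled 0..n-1; photon j starts in input mode j.\<close>

definition omega :: "nat \<Rightarrow> complex" where
  "omega n = cis (2 * pi / real n)"

text \<open>Fourier interferometer: a_r^dagger maps to (1/sqrt n) sum_j omega^(-r j) a_j^dagger,
  so the single-photon amplitude from input mode r to output mode j is:\<close>
definition fourier :: "nat \<Rightarrow> nat \<Rightarrow> nat \<Rightarrow> complex" where
  "fourier n r j = (inverse (omega n)) ^ (r * j) / complex_of_real (sqrt (real n))"

definition patterns :: "nat \<Rightarrow> nat \<Rightarrow> (nat \<Rightarrow> nat) set" where
  "patterns n m = {s. (\<forall>i. s i \<noteq> 0 \<longrightarrow> i < n) \<and> (\<Sum>i<n. s i) = m}"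

definition valid_pattern :: "nat \<Rightarrow> (nat \<Rightarrow> nat) \<Rightarrow> bool" where
  "valid_pattern n s \<longleftrightarrow> (\<Sum>i<n. i * s i) mod n = 0"

definition cnt :: "nat set \<Rightarrow> (nat \<Rightarrow> nat) \<Rightarrow> nat \<Rightarrow> nat" where
  "cnt A f k = card {j \<in> A. f j = k}"

text \<open>Bosonic amplitude (up to the normalisation 1/sqrt(prod t_k!)) for the fully
  indistinguishable photons in input modes I to produce output pattern t:
  Perm(U[I,t]) / prod t_k! = sum over assignments f of I to output modes with
  occupation t of prod_j U_(j, f j).\<close>
definition amp :: "nat \<Rightarrow> nat set \<Rightarrow> (nat \<Rightarrow> nat) \<Rightarrow> complex" where
  "amp n I t = (\<Sum>f \<in> {f \<in> I \<rightarrow>\<^sub>E {..<n}. \<forall>k<n. cnt I f k = t k}.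
                   \<Prod>j\<in>I. fourier n j (f j))"

text \<open>Probability |Perm(U[I,t])|^2 / prod t_k! of pattern t for indistinguishable photons in I.\<close>
definition prob_ident :: "nat \<Rightarrow> nat set \<Rightarrow> (nat \<Rightarrow> nat) \<Rightarrow> real" where
  "prob_ident n I t = (\<Prod>k<n. fact (t k)) * (cmod (amp n I t))\<^sup>2"

text \<open>Probability of output pattern s when the photons in I are in the common internal
  state and every other photon is in an internal state orthogonal to all others:
  the latter propagate classically and independently, and the detectors do not
  resolve internal states, so the occupation numbers add up.\<close>
definition prob_pattern :: "nat \<Rightarrow> nat set \<Rightarrow> (nat \<Rightarrow> nat) \<Rightarrow> real" where
  "prob_pattern n I s =
     (let D = {..<n} - I in
      \<Sum>g \<in> D \<rightarrow>\<^sub>E {..<n}.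
        (\<Prod>j\<in>D. (cmod (fourier n j (g j)))\<^sup>2) *
        (if (\<forall>k<n. cnt D g k \<le> s k) then prob_ident n I (\<lambda>k. s k - cnt D g k) else 0))"

text \<open>OBB model: each photon independently is identical with probability 1 - eps and
  distinguishable with probability eps. Probability of a valid pattern:\<close>
definition prob_valid_OBB :: "nat \<Rightarrow> real \<Rightarrow> real" where
  "prob_valid_OBB n eps =
     (\<Sum>I \<in> Pow {..<n}. (1 - eps) ^ card I * eps ^ (n - card I) *
        (\<Sum>s \<in> {s \<in> patterns n n. valid_pattern n s}. prob_pattern n I s))"

end

theory Submission
  imports Defs "HOL-Combinatorics.Permutations"
begin


lemma omega_nz: "omega n \<noteq> 0" by (simp add: omega_def)
lemma cmod_omega: "cmod (omega n) = 1" by (simp add: omega_def)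

lemma omega_pow: "omega n ^ k = cis (2 * pi * real k / real n)"
  by (simp add: omega_def DeMoivre mult.commute)

lemma omega_pow_n: "n \<ge> 1 \<Longrightarrow> omega n ^ n = 1"
  by (simp add: omega_pow)

lemma omega_pow_eq_1: assumes "n \<ge> 1" shows "omega n ^ k = 1 \<longleftrightarrow> n dvd k"
proof
  assume "omega n ^ k = 1"
  then have "cos (2 * pi * real k / real n) = 1" by (simp add: omega_pow cis.ctr complex_eq_iff)
  then obtain m :: int where m: "2 * pi * real k / real n = real_of_int m * 2 * pi"
    using cos_one_2pi_int by blast
  then have "real k = real_of_int m * real n" using assms by (simp add: field_simps)
  then have "int k = m * int n" by (metis of_int_eq_iff of_int_mult of_int_of_nat_eq)
  then show "n dvd k" by (metis dvd_triv_right int_dvd_int_iff)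
next
  assume "n dvd k" then obtain q where "k = n * q" by blast
  then show "omega n ^ k = 1" using omega_pow_n[OF assms] by (simp add: power_mult)
qed

lemma pow_mod_n: "(x::complex) ^ n = 1 \<Longrightarrow> x ^ m = x ^ (m mod n)"
proof -
  assume h: "x ^ n = 1"
  have "x ^ m = x ^ (n * (m div n) + m mod n)" by simp
  also have "\<dots> = x ^ (n * (m div n)) * x ^ (m mod n)" by (rule power_add)
  also have "x ^ (n * (m div n)) = 1" using h by (simp add: power_mult)
  finally show ?thesis by simp
qed

lemma inv_omega_pow_n: "n \<ge> 1 \<Longrightarrow> inverse (omega n) ^ n = 1"
  by (simp add: power_inverse omega_pow_n)

lemma cmod_fourier_sq: "(cmod (fourier n j k))\<^sup>2 = 1 / real n"
  by (simp add: fourier_def norm_divide norm_power cmod_omega norm_inverse power_divide)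

lemma cnj_inv_omega: "inverse (cnj (omega n)) = omega n"
  by (simp add: omega_def cis_cnj)

lemma cnj_fourier: "cnj (fourier n j k) = omega n ^ (j * k) / complex_of_real (sqrt (real n))"
  by (simp add: fourier_def cnj_inv_omega)

lemma fourier_orth:
  assumes n: "n \<ge> 1" and i: "i < n" and i': "i' < n"
  shows "(\<Sum>k<n. fourier n i k * cnj (fourier n i' k)) = (if i = i' then 1 else 0)"
proof -
  define w where "w = omega n"
  define z where "z = inverse w ^ i * w ^ i'"
  have wn: "w ^ n = 1" using omega_pow_n[OF n] by (simp add: w_def)
  have w0: "w \<noteq> 0" by (simp add: w_def omega_nz)
  have s: "complex_of_real (sqrt (real n)) * complex_of_real (sqrt (real n)) = of_nat n"
    by (simp flip: of_real_mult)
  have tm: "fourier n i k * cnj (fourier n i' k) = z ^ k / of_nat n" for k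
  proof -
    have "fourier n i k * cnj (fourier n i' k) = (inverse w ^ (i * k) * w ^ (i' * k)) /
       (complex_of_real (sqrt (real n)) * complex_of_real (sqrt (real n)))"
      unfolding cnj_fourier by (simp add: fourier_def w_def)
    also have "inverse w ^ (i * k) * w ^ (i' * k) = z ^ k"
      by (simp add: z_def power_mult power_mult_distrib)
    finally show ?thesis using s by simp
  qed
  have zn: "z ^ n = 1"
  proof -
    have "z ^ n = inverse ((w ^ n) ^ i) * (w ^ n) ^ i'"
      by (simp add: z_def power_mult_distrib power_inverse flip: power_mult)
        (simp add: mult.commute power_mult)
    then show ?thesis using wn by simp
  qed
  show ?thesis
  proof (cases "i = i'")
    case True
    then have "z = 1" using w0 by (simp add: z_def power_inverse)
    then show ?thesis using True n tm by simp
  next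
    case False
    have "z \<noteq> 1"
    proof
      assume "z = 1"
      then have "w ^ i' = w ^ i" using w0 by (simp add: z_def power_inverse field_simps)
      then have "w ^ (i' + (n - i)) = w ^ (i + (n - i))" by (simp add: power_add)
      also have "\<dots> = 1" using i wn by simp
      finally have "n dvd (i' + (n - i))" using omega_pow_eq_1[OF n] w_def by simp
      then obtain q where q: "i' + (n - i) = n * q" by blast
      have a: "0 < n * q" using i q by linarith
      have b: "n * q < n * 2" using i i' q by linarith
      have "q = 1" using a b by auto
      then show False using False i i' q by simp
    qed
    have "(\<Sum>k<n. fourier n i k * cnj (fourier n i' k)) = (\<Sum>k<n. z ^ k) / of_nat n"
      by (simp add: tm sum_divide_distrib)
    also have "(\<Sum>k<n. z ^ k) = 0" using \<open>z \<noteq> 1\<close> zn by (simp add: sum_gp_strict)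
    finally show ?thesis using False by simp
  qed
qed



lemma card_fiber_perm:
  assumes "p permutes A"
  shows "card {x\<in>A. f (p x) = k} = card {x\<in>A. f x = k}"
proof -
  have "p ` {x\<in>A. f (p x) = k} = {x\<in>A. f x = k}"
  proof
    show "p ` {x\<in>A. f (p x) = k} \<subseteq> {x\<in>A. f x = k}"
      using assms by (auto simp: permutes_in_image)
    show "{x\<in>A. f x = k} \<subseteq> p ` {x\<in>A. f (p x) = k}"
    proof
      fix y assume y: "y \<in> {x\<in>A. f x = k}"
      have "inv p y \<in> A" using y assms by (simp add: permutes_in_image permutes_inv)
      moreover have "p (inv p y) = y" using assms by (simp add: permutes_inverses)
      ultimately show "y \<in> p ` {x\<in>A. f (p x) = k}" using y by (metis (mono_tags, lifting) image_eqI mem_Collect_eq)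
    qed
  qed
  moreover have "inj_on p {x\<in>A. f (p x) = k}"
    using assms permutes_inj inj_on_subset by blast
  ultimately show ?thesis by (metis card_image)
qed

lemma count_perms:
  assumes "finite I"
  shows "\<forall>f g. (\<forall>k. card {x\<in>I. f x = k} = card {x\<in>I. g x = k}) \<longrightarrow> f ` I \<subseteq> K \<longrightarrow> finite K \<longrightarrow>
     card {\<sigma>. \<sigma> permutes I \<and> (\<forall>x\<in>I. f (\<sigma> x) = g x)} = (\<Prod>k\<in>K. fact (card {x\<in>I. f x = k}))"
  using assms
proof (induction I rule: finite_induct)
  case empty
  then show ?case by simp
next
  case (insert a J)
  show ?case
  proof (intro allI impI)
    fix f g :: "'a \<Rightarrow> 'b"
    assume same: "\<forall>k. card {x\<in>insert a J. f x = k} = card {x\<in>insert a J. g x = k}"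
      and fK: "f ` insert a J \<subseteq> K" and finK: "finite K"
    define I where "I = insert a J"
    define c where "c = g a"
    define B where "B = {b\<in>I. f b = c}"
    define T where "T = (\<lambda>b. {p. p permutes J \<and> (\<forall>x\<in>J. f (transpose a b (p x)) = g x)})"
    define E where "E = (\<lambda>k. card {x\<in>I. f x = k} - (if k = c then 1 else 0))"
    have finI: "finite I" using insert by (simp add: I_def)
    have aJ: "a \<notin> J" using insert by simp
    have S_eq: "{\<sigma>. \<sigma> permutes I \<and> (\<forall>x\<in>I. f (\<sigma> x) = g x)} = (\<lambda>(b, p). transpose a b \<circ> p) ` Sigma B T"
    proof
      show "{\<sigma>. \<sigma> permutes I \<and> (\<forall>x\<in>I. f (\<sigma> x) = g x)} \<subseteq> (\<lambda>(b, p). transpose a b \<circ> p) ` Sigma B T"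
      proof
        fix \<sigma> assume s: "\<sigma> \<in> {\<sigma>. \<sigma> permutes I \<and> (\<forall>x\<in>I. f (\<sigma> x) = g x)}"
        define b where "b = \<sigma> a"
        define p where "p = transpose a b \<circ> \<sigma>"
        have sp: "\<sigma> permutes I" using s by simp
        have "\<sigma> a \<in> I" using permutes_in_image[OF sp, of a] by (simp add: I_def)
        then have "b \<in> B" using s by (auto simp: B_def b_def c_def I_def)
        moreover have "p permutes J" using s permutes_insert_lemma[of \<sigma> a J]
          by (simp add: p_def b_def I_def)
        moreover have "\<sigma> = transpose a b \<circ> p"
          unfolding p_def o_assoc transpose_comp_involutory by simp
        moreover have "\<forall>x\<in>J. f (transpose a b (p x)) = g x"
          using s by (simp add: p_def I_def)
        ultimately show "\<sigma> \<in> (\<lambda>(b, p). transpose a b \<circ> p) ` Sigma B T"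
          by (auto simp: T_def intro!: image_eqI[where x="(b,p)"])
      qed
      show "(\<lambda>(b, p). transpose a b \<circ> p) ` Sigma B T \<subseteq> {\<sigma>. \<sigma> permutes I \<and> (\<forall>x\<in>I. f (\<sigma> x) = g x)}"
      proof safe
        fix b p assume b: "b \<in> B" and p: "p \<in> T b"
        have pJ: "p permutes J" using p by (simp add: T_def)
        have bI: "b \<in> I" using b by (simp add: B_def)
        have pa: "p a = a" using pJ aJ by (simp add: permutes_not_in)
        show "transpose a b \<circ> p permutes I"
          by (rule permutes_compose[OF permutes_imp_permutes_insert[OF pJ, of a, folded I_def]])
             (rule permutes_swap_id, use bI in \<open>auto simp: I_def\<close>)
        show "f ((transpose a b \<circ> p) x) = g x" if "x \<in> I" for x
          using that p b pa by (auto simp: T_def B_def c_def I_def)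
      qed
    qed
    have inj: "inj_on (\<lambda>(b, p). transpose a b \<circ> p) (Sigma B T)"
    proof (rule inj_onI, clarify)
      fix b p b' p' assume b: "b \<in> B" "p \<in> T b" "b' \<in> B" "p' \<in> T b'"
        and eq: "transpose a b \<circ> p = transpose a b' \<circ> p'"
      have "p a = a" "p' a = a" using b aJ by (auto simp: T_def permutes_not_in)
      then have "b = b'" using fun_cong[OF eq, of a] by simp
      then have "transpose a b \<circ> (transpose a b \<circ> p) = transpose a b \<circ> (transpose a b \<circ> p')"
        using eq by simp
      then have "p = p'" unfolding o_assoc transpose_comp_involutory by simp
      then show "b = b' \<and> p = p'" using \<open>b = b'\<close> by simp
    qed
    have finB: "finite B" using finI by (simp add: B_def)
    have finT: "finite (T b)" for b
      by (rule finite_subset[OF _ finite_permutations[of J]]) (auto simp: T_def insert)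
    have cardT: "card (T b) = (\<Prod>k\<in>K. fact (E k))" if b: "b \<in> B" for b
    proof -
      have bI: "b \<in> I" using b by (simp add: B_def)
      have tp: "transpose a b permutes I" by (rule permutes_swap_id) (use bI in \<open>auto simp: I_def\<close>)
      have cf: "card {x\<in>J. f (transpose a b x) = k} = E k" for k
      proof -
        have "{x\<in>J. f (transpose a b x) = k} = {x\<in>I. f (transpose a b x) = k} - {a}"
          using aJ by (auto simp: I_def)
        moreover have "card {x\<in>I. f (transpose a b x) = k} = card {x\<in>I. f x = k}"
          by (rule card_fiber_perm[OF tp])
        moreover have "a \<in> {x\<in>I. f (transpose a b x) = k} \<longleftrightarrow> k = c"
          using b by (auto simp: I_def B_def)
        ultimately show ?thesis using finI by (cases "k = c") (simp_all add: E_def card_Diff_singleton_if)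
      qed
      have cg: "card {x\<in>J. g x = k} = E k" for k
      proof -
        have "{x\<in>J. g x = k} = {x\<in>I. g x = k} - {a}"
          using aJ by (auto simp: I_def)
        moreover have "a \<in> {x\<in>I. g x = k} \<longleftrightarrow> k = c"
          by (auto simp: I_def c_def)
        ultimately show ?thesis using finI same by (simp add: E_def card_Diff_singleton_if I_def)
      qed
      have fK': "(\<lambda>x. f (transpose a b x)) ` J \<subseteq> K"
      proof
        fix y assume "y \<in> (\<lambda>x. f (transpose a b x)) ` J"
        then obtain x where x: "x \<in> J" "y = f (transpose a b x)" by blast
        have "x \<in> I" using x by (simp add: I_def)
        then have "transpose a b x \<in> I" using permutes_in_image[OF tp] by blast
        then show "y \<in> K" using fK x by (auto simp: I_def)
      qed
      have "card {p. p permutes J \<and> (\<forall>x\<in>J. f (transpose a b (p x)) = g x)} =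
            (\<Prod>k\<in>K. fact (card {x\<in>J. f (transpose a b x) = k}))"
        using insert.IH[rule_format, of "\<lambda>x. f (transpose a b x)" g] cf cg fK' finK by simp
      then show ?thesis by (simp add: T_def cf)
    qed
    have aB: "card B \<ge> 1"
    proof -
      have "a \<in> {x\<in>I. g x = c}" by (simp add: I_def c_def)
      then have "0 < card {x\<in>I. g x = c}" using finI by (auto simp: card_gt_0_iff)
      then have "card {x\<in>I. g x = c} \<ge> 1" by simp
      then show ?thesis using same by (simp add: B_def I_def)
    qed
    then obtain b0 where b0: "b0 \<in> B" by (metis card.empty ex_in_conv not_one_le_zero)
    have cK: "c \<in> K" using b0 fK by (auto simp: B_def I_def)
    have "card {\<sigma>. \<sigma> permutes I \<and> (\<forall>x\<in>I. f (\<sigma> x) = g x)} = card (Sigma B T)"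
      by (simp add: S_eq card_image[OF inj])
    also have "\<dots> = (\<Sum>b\<in>B. card (T b))" using finB finT by (simp add: card_SigmaI)
    also have "\<dots> = card B * (\<Prod>k\<in>K. fact (E k))" using cardT by simp
    also have "\<dots> = (\<Prod>k\<in>K. fact (card {x\<in>I. f x = k}))"
    proof -
      have "(\<Prod>k\<in>K. fact (E k)) = fact (E c) * (\<Prod>k\<in>K-{c}. fact (E k))"
        using finK cK by (simp add: prod.remove)
      moreover have "(\<Prod>k\<in>K. fact (card {x\<in>I. f x = k}) :: nat) =
          fact (card B) * (\<Prod>k\<in>K-{c}. fact (card {x\<in>I. f x = k}))"
        using finK cK by (simp add: prod.remove B_def)
      moreover have "(\<Prod>k\<in>K-{c}. fact (E k)) = (\<Prod>k\<in>K-{c}. fact (card {x\<in>I. f x = k}) :: nat)"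
        by (rule prod.cong) (auto simp: E_def)
      moreover have "E c = card B - 1" by (simp add: E_def B_def)
      moreover have "card B * fact (card B - 1) = (fact (card B) :: nat)"
      proof -
        obtain m where "card B = Suc m" using aB by (metis Suc_le_D One_nat_def)
        then show ?thesis by simp
      qed
      ultimately show ?thesis by (metis mult.assoc)
    qed
    finally show "card {\<sigma>. \<sigma> permutes insert a J \<and> (\<forall>x\<in>insert a J. f (\<sigma> x) = g x)} =
         (\<Prod>k\<in>K. fact (card {x\<in>insert a J. f x = k}))" by (simp add: I_def)
  qed
qed



lemma cnt_sum:
  assumes "finite A" "f ` A \<subseteq> {..<n}"
  shows "(\<Sum>k<n. cnt A f k) = card A"
  using sum.group[OF assms(1) _ assms(2), of "\<lambda>_. 1::nat"] by (simp add: cnt_def)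

lemma cnt_wsum:
  assumes "finite A" "f ` A \<subseteq> {..<n}"
  shows "(\<Sum>k<n. k * cnt A f k) = (\<Sum>j\<in>A. f j)"
proof -
  have "(\<Sum>j\<in>A. f j) = (\<Sum>k<n. \<Sum>j\<in>{x. x \<in> A \<and> f x = k}. f j)"
    using sum.group[OF assms(1) _ assms(2), of f] by simp
  also have "\<dots> = (\<Sum>k<n. k * cnt A f k)"
    by (rule sum.cong) (auto simp: cnt_def)
  finally show ?thesis by simp
qed

lemma cnt_out:
  assumes "f ` A \<subseteq> {..<n}" "n \<le> k"
  shows "cnt A f k = 0"
proof -
  have e: "{j\<in>A. f j = k} = {}" using assms by auto
  show ?thesis unfolding cnt_def e by simp
qed

lemma PiE_image: "f \<in> A \<rightarrow>\<^sub>E {..<n} \<Longrightarrow> f ` A \<subseteq> {..<n}"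
  by auto

lemma sum_perm_orth:
  assumes n: "n \<ge> 1" and I: "I \<subseteq> {..<n}" and s: "\<sigma> permutes I"
  shows "(\<Sum>f\<in>I \<rightarrow>\<^sub>E {..<n}. (\<Prod>j\<in>I. fourier n j (f j)) * cnj (\<Prod>j\<in>I. fourier n j ((f \<circ> \<sigma>) j)))
         = (if \<sigma> = id then 1 else 0)"
proof -
  have finI: "finite I" using I finite_subset by blast
  have "(\<Sum>f\<in>I \<rightarrow>\<^sub>E {..<n}. (\<Prod>j\<in>I. fourier n j (f j)) * cnj (\<Prod>j\<in>I. fourier n j ((f \<circ> \<sigma>) j)))
     = (\<Sum>f\<in>I \<rightarrow>\<^sub>E {..<n}. \<Prod>i\<in>I. fourier n i (f i) * cnj (fourier n (inv \<sigma> i) (f i)))"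
  proof (rule sum.cong[OF refl])
    fix f
    have "cnj (\<Prod>j\<in>I. fourier n j ((f \<circ> \<sigma>) j)) = (\<Prod>j\<in>I. (\<lambda>a b. cnj (fourier n b (f a))) (\<sigma> j) j)"
      by (simp add: cnj_prod)
    also have "\<dots> = (\<Prod>i\<in>I. cnj (fourier n (inv \<sigma> i) (f i)))"
      by (rule prod.permutes_inv[OF s])
    finally show "(\<Prod>j\<in>I. fourier n j (f j)) * cnj (\<Prod>j\<in>I. fourier n j ((f \<circ> \<sigma>) j)) =
        (\<Prod>i\<in>I. fourier n i (f i) * cnj (fourier n (inv \<sigma> i) (f i)))"
      by (simp add: prod.distrib)
  qed
  also have "\<dots> = (\<Prod>i\<in>I. \<Sum>k<n. fourier n i k * cnj (fourier n (inv \<sigma> i) k))"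
    by (rule prod_sum_PiE[symmetric]) (use finI in auto)
  also have "\<dots> = (\<Prod>i\<in>I. if i = inv \<sigma> i then 1 else 0)"
  proof (rule prod.cong[OF refl])
    fix i assume i: "i \<in> I"
    have "inv \<sigma> i \<in> I" using i s by (simp add: permutes_in_image permutes_inv)
    moreover have "i < n" "inv \<sigma> i < n" using I i \<open>inv \<sigma> i \<in> I\<close> by (auto simp: subset_eq)
    ultimately show "(\<Sum>k<n. fourier n i k * cnj (fourier n (inv \<sigma> i) k)) = (if i = inv \<sigma> i then 1 else 0)"
      using fourier_orth[OF n, of i "inv \<sigma> i"] i I by auto
  qed
  also have "\<dots> = (if \<sigma> = id then 1 else 0)"
  proof (cases "\<sigma> = id")
    case True
    then show ?thesis by (simp add: inv_id)
  next
    case False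
    have "\<exists>i\<in>I. i \<noteq> inv \<sigma> i"
    proof (rule ccontr)
      assume "\<not> (\<exists>i\<in>I. i \<noteq> inv \<sigma> i)"
      then have h: "\<forall>i\<in>I. inv \<sigma> i = i" by auto
      have "\<sigma> x = x" for x
      proof (cases "x \<in> I")
        case True
        then have "\<sigma> (inv \<sigma> x) = x" using s by (simp add: permutes_inverses)
        then show ?thesis using h True by simp
      next
        case False then show ?thesis using s by (simp add: permutes_not_in)
      qed
      then have "\<sigma> = id" by auto
      then show False using False by simp
    qed
    then show ?thesis using False finI by (auto simp: prod_zero_iff)
  qed
  finally show ?thesis .
qed



lemma norm_ident:
  assumes n: "n \<ge> 1" and I: "I \<subseteq> {..<n}"
  shows "(\<Sum>t\<in>patterns n (card I). prob_ident n I t) = 1"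
proof -
  define F where "F = I \<rightarrow>\<^sub>E {..<n}"
  define ty where "ty = (\<lambda>f k. cnt I f k)"
  define A where "A = (\<lambda>f. \<Prod>j\<in>I. fourier n j (f j))"
  define S where "S = (\<lambda>t. {f \<in> F. \<forall>k<n. cnt I f k = t k})"
  define P where "P = patterns n (card I)"
  define Perms where "Perms = {\<sigma>. \<sigma> permutes I}"
  define fc where "fc = (\<lambda>t. complex_of_real (\<Prod>k<n. fact (t k)))"
  have finI: "finite I" using I finite_subset by blast
  have finF: "finite F" using finI by (simp add: F_def finite_PiE)
  have finPerms: "finite Perms" using finI by (simp add: Perms_def finite_permutations)
  have amp_eq: "amp n I t = (\<Sum>f\<in>S t. A f)" for t
    by (simp add: amp_def S_def F_def A_def)
  have finP: "finite P"
  proof -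
    have "P \<subseteq> {t. \<forall>x. (x \<in> {..<n} \<longrightarrow> t x \<in> {..card I}) \<and> (x \<notin> {..<n} \<longrightarrow> t x = 0)}"
    proof
      fix t assume t: "t \<in> P"
      have "t x \<le> card I" if "x < n" for x
      proof -
        have "t x \<le> (\<Sum>k<n. t k)" using that by (intro member_le_sum) auto
        then show ?thesis using t by (simp add: P_def patterns_def)
      qed
      then show "t \<in> {t. \<forall>x. (x \<in> {..<n} \<longrightarrow> t x \<in> {..card I}) \<and> (x \<notin> {..<n} \<longrightarrow> t x = 0)}"
        using t by (auto simp: P_def patterns_def)
    qed
    then show ?thesis by (rule finite_subset) (rule finite_set_of_finite_funs, auto)
  qed
  have ty_in: "ty f \<in> P" if "f \<in> F" for f
  proof -
    have im: "f ` I \<subseteq> {..<n}" using that by (auto simp: F_def)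
    show ?thesis
      using cnt_out[OF im] cnt_sum[OF finI im] by (auto simp: P_def patterns_def ty_def) (metis gr_implies_not0 not_less)
  qed
  have S_eq: "S t = {f. f \<in> F \<and> ty f = t}" if "t \<in> P" for t
  proof -
    have "(\<forall>k<n. cnt I f k = t k) \<longleftrightarrow> ty f = t" if f: "f \<in> F" for f
    proof -
      have im: "f ` I \<subseteq> {..<n}" using f by (auto simp: F_def)
      have "t k = 0" if "\<not> k < n" for k using \<open>t \<in> P\<close> that by (auto simp: P_def patterns_def)
      then show ?thesis using cnt_out[OF im] by (auto simp: ty_def not_less fun_eq_iff) (metis not_less)
    qed
    then show ?thesis by (auto simp: S_def)
  qed
  have Q_eq: "fc (ty f) * (\<Sum>g\<in>S (ty f). A f * cnj (A g)) = (\<Sum>\<sigma>\<in>Perms. A f * cnj (A (f \<circ> \<sigma>)))"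
    if f: "f \<in> F" for f
  proof -
    have im: "f ` I \<subseteq> {..<n}" using f by (auto simp: F_def)
    have tyP: "ty f \<in> P" using ty_in[OF f] .
    have img: "(\<lambda>\<sigma>. f \<circ> \<sigma>) ` Perms \<subseteq> S (ty f)"
    proof
      fix h assume "h \<in> (\<lambda>\<sigma>. f \<circ> \<sigma>) ` Perms"
      then obtain \<sigma> where s: "\<sigma> permutes I" and h: "h = f \<circ> \<sigma>" by (auto simp: Perms_def)
      have "h \<in> F"
      proof -
        have "h x \<in> {..<n}" if "x \<in> I" for x
          using that s f by (simp add: h F_def PiE_iff permutes_in_image)
        moreover have "h x = undefined" if "x \<notin> I" for x
          using that s f by (simp add: h F_def PiE_iff permutes_not_in extensional_def)
        ultimately show ?thesis by (auto simp: F_def PiE_iff extensional_def)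
      qed
      moreover have "cnt I h k = cnt I f k" for k
        using card_fiber_perm[OF s] by (simp add: cnt_def h)
      ultimately show "h \<in> S (ty f)" by (simp add: S_def ty_def)
    qed
    have cardeq: "card {\<sigma>. \<sigma> \<in> Perms \<and> f \<circ> \<sigma> = g} = (\<Prod>k<n. fact (cnt I f k))" if g: "g \<in> S (ty f)" for g
    proof -
      have gF: "g \<in> F" using g by (simp add: S_def)
      have imf: "f ` I \<subseteq> {..<n}" using f by (auto simp: F_def)
      have img': "g ` I \<subseteq> {..<n}" using gF by (auto simp: F_def)
      have same: "\<forall>k. card {x\<in>I. f x = k} = card {x\<in>I. g x = k}"
      proof
        fix k show "card {x\<in>I. f x = k} = card {x\<in>I. g x = k}"
        proof (cases "k < n")
          case True then show ?thesis using g by (simp add: S_def ty_def cnt_def)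
        next
          case False then show ?thesis using cnt_out[OF imf, of k] cnt_out[OF img', of k] by (simp add: cnt_def)
        qed
      qed
      have "{\<sigma>. \<sigma> \<in> Perms \<and> f \<circ> \<sigma> = g} = {\<sigma>. \<sigma> permutes I \<and> (\<forall>x\<in>I. f (\<sigma> x) = g x)}"
      proof (rule Collect_cong)
        fix \<sigma>
        show "(\<sigma> \<in> Perms \<and> f \<circ> \<sigma> = g) \<longleftrightarrow> (\<sigma> permutes I \<and> (\<forall>x\<in>I. f (\<sigma> x) = g x))"
        proof (cases "\<sigma> permutes I")
          case True
          have "f \<circ> \<sigma> = g \<longleftrightarrow> (\<forall>x\<in>I. f (\<sigma> x) = g x)"
          proof
            assume "\<forall>x\<in>I. f (\<sigma> x) = g x"
            moreover have "f (\<sigma> x) = g x" if "x \<notin> I" for x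
              using that True f gF by (simp add: permutes_not_in F_def PiE_iff extensional_def)
            ultimately show "f \<circ> \<sigma> = g" by (auto simp: fun_eq_iff)
          qed auto
          then show ?thesis using True by (simp add: Perms_def)
        qed (simp add: Perms_def)
      qed
      also have "card \<dots> = (\<Prod>k\<in>{..<n}. fact (card {x\<in>I. f x = k}))"
        using count_perms[OF finI, rule_format, of f g "{..<n}"] same imf by simp
      finally show ?thesis by (simp add: cnt_def)
    qed
    have "(\<Sum>\<sigma>\<in>Perms. A f * cnj (A (f \<circ> \<sigma>))) =
          (\<Sum>g\<in>S (ty f). \<Sum>\<sigma>\<in>{\<sigma>. \<sigma> \<in> Perms \<and> f \<circ> \<sigma> = g}. A f * cnj (A g))"
      using sum.group[OF finPerms _ img, of "\<lambda>\<sigma>. A f * cnj (A (f \<circ> \<sigma>))"] finF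
      by (simp add: S_def)
    also have "\<dots> = (\<Sum>g\<in>S (ty f). of_nat (\<Prod>k<n. fact (cnt I f k)) * (A f * cnj (A g)))"
      by (rule sum.cong[OF refl]) (simp add: cardeq)
    also have "\<dots> = fc (ty f) * (\<Sum>g\<in>S (ty f). A f * cnj (A g))"
      by (simp add: fc_def ty_def sum_distrib_left)
    finally show ?thesis by simp
  qed
  have "complex_of_real (\<Sum>t\<in>P. prob_ident n I t) = (\<Sum>t\<in>P. fc t * (amp n I t * cnj (amp n I t)))"
  proof -
    have cns: "(complex_of_real (cmod z))\<^sup>2 = z * cnj z" for z
      using complex_norm_square[of z] by simp
    show ?thesis by (simp add: prob_ident_def fc_def cns)
  qed
  also have "\<dots> = (\<Sum>t\<in>P. \<Sum>f\<in>{f. f \<in> F \<and> ty f = t}. fc (ty f) * (\<Sum>g\<in>S (ty f). A f * cnj (A g)))"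
  proof (rule sum.cong[OF refl])
    fix t assume t: "t \<in> P"
    have "fc t * (amp n I t * cnj (amp n I t)) = fc t * (\<Sum>f\<in>S t. \<Sum>g\<in>S t. A f * cnj (A g))"
      by (simp add: amp_eq cnj_sum sum_product)
    also have "\<dots> = (\<Sum>f\<in>S t. fc (ty f) * (\<Sum>g\<in>S (ty f). A f * cnj (A g)))"
      by (simp add: sum_distrib_left S_eq[OF t])
    finally show "fc t * (amp n I t * cnj (amp n I t)) =
        (\<Sum>f\<in>{f. f \<in> F \<and> ty f = t}. fc (ty f) * (\<Sum>g\<in>S (ty f). A f * cnj (A g)))"
      by (simp add: S_eq[OF t])
  qed
  also have "\<dots> = (\<Sum>f\<in>F. fc (ty f) * (\<Sum>g\<in>S (ty f). A f * cnj (A g)))"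
    by (rule sum.group[OF finF finP]) (use ty_in in auto)
  also have "\<dots> = (\<Sum>f\<in>F. \<Sum>\<sigma>\<in>Perms. A f * cnj (A (f \<circ> \<sigma>)))"
    by (rule sum.cong[OF refl]) (rule Q_eq)
  also have "\<dots> = (\<Sum>\<sigma>\<in>Perms. \<Sum>f\<in>F. A f * cnj (A (f \<circ> \<sigma>)))"
    by (rule sum.swap)
  also have "\<dots> = (\<Sum>\<sigma>\<in>Perms. if \<sigma> = id then 1 else 0)"
    by (rule sum.cong[OF refl]) (use sum_perm_orth[OF n I] in \<open>simp add: Perms_def F_def A_def\<close>)
  also have "\<dots> = 1"
    using finPerms by (simp add: Perms_def permutes_id)
  finally have "complex_of_real (\<Sum>t\<in>P. prob_ident n I t) = 1" .
  then show ?thesis unfolding P_def by (simp only: of_real_eq_1_iff)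
qed



lemma PiE_comp_perm:
  assumes "f \<in> I \<rightarrow>\<^sub>E B" "\<sigma> permutes I"
  shows "f \<circ> \<sigma> \<in> I \<rightarrow>\<^sub>E B"
  using assms by (auto simp: PiE_iff permutes_in_image permutes_not_in extensional_def)

definition rot :: "nat \<Rightarrow> nat \<Rightarrow> nat" where
  "rot n i = (if i < n then (if i + 1 = n then 0 else i + 1) else i)"
definition rot' :: "nat \<Rightarrow> nat \<Rightarrow> nat" where
  "rot' n i = (if i < n then (if i = 0 then n - 1 else i - 1) else i)"

lemma rot_inv1: "rot' n (rot n i) = i" by (auto simp: rot_def rot'_def)
lemma rot_inv2: "rot n (rot' n i) = i" by (auto simp: rot_def rot'_def)

lemma rot_permutes: "rot n permutes {..<n}"
  unfolding permutes_def
proof (intro conjI allI impI)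
  fix x assume "x \<notin> {..<n}" then show "rot n x = x" by (simp add: rot_def)
next
  fix y show "\<exists>!x. rot n x = y"
    by (rule ex1I[of _ "rot' n y"]) (simp add: rot_inv2, metis rot_inv1)
qed

lemma fourier_rot:
  assumes n: "n \<ge> 1" and i: "i < n"
  shows "fourier n (rot n i) k = fourier n i k * inverse (omega n) ^ k"
proof (cases "i + 1 = n")
  case True
  have "inverse (omega n) ^ (i * k) * inverse (omega n) ^ k = inverse (omega n) ^ (n * k)"
  proof -
    have e: "i * k + k = n * k" using True by (auto simp: algebra_simps)
    show ?thesis by (simp add: e flip: power_add)
  qed
  also have "\<dots> = 1" using inv_omega_pow_n[OF n] by (simp add: power_mult)
  finally show ?thesis using True i by (simp add: rot_def fourier_def)
next
  case False
  then show ?thesis using i by (simp add: rot_def fourier_def power_add algebra_simps)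
qed

lemma suppression:
  assumes n: "n \<ge> 1" and t: "t \<in> patterns n n" and nv: "\<not> valid_pattern n t"
  shows "amp n {..<n} t = 0"
proof -
  define F where "F = {..<n} \<rightarrow>\<^sub>E {..<(n::nat)}"
  define S where "S = {f \<in> F. \<forall>k<n. cnt {..<n} f k = t k}"
  define A where "A = (\<lambda>f. \<Prod>j<n. fourier n j (f j))"
  define r where "r = rot n"
  define \<phi> where "\<phi> = (\<Sum>i<n. i * t i)"
  define c where "c = inverse (omega n) ^ \<phi>"
  have rp: "r permutes {..<n}" by (simp add: r_def rot_permutes)
  have amp_eq: "amp n {..<n} t = (\<Sum>f\<in>S. A f)"
    by (simp add: amp_def S_def F_def A_def)
  have Af: "A f = A (f \<circ> r) * c" if f: "f \<in> S" for f
  proof -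
    have im: "f ` {..<n} \<subseteq> {..<n}" using f by (auto simp: S_def F_def)
    have "A f = (\<Prod>j<n. fourier n (r j) (f (r j)))"
      unfolding A_def by (rule prod.permute[OF rp, simplified comp_def])
    also have "\<dots> = (\<Prod>j<n. fourier n j (f (r j)) * inverse (omega n) ^ (f (r j)))"
      by (rule prod.cong[OF refl]) (simp add: r_def fourier_rot[OF n])
    also have "\<dots> = A (f \<circ> r) * (\<Prod>j<n. inverse (omega n) ^ (f (r j)))"
      by (simp add: A_def prod.distrib)
    also have "(\<Prod>j<n. inverse (omega n) ^ (f (r j))) = inverse (omega n) ^ (\<Sum>j<n. f (r j))"
      by (simp add: power_sum)
    also have "(\<Sum>j<n. f (r j)) = (\<Sum>j<n. f j)"
      using sum.permute[OF rp, of f] by (simp add: comp_def)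
    also have "\<dots> = \<phi>"
      using cnt_wsum[OF _ im] f by (simp add: \<phi>_def S_def)
    finally show ?thesis by (simp add: c_def comp_def)
  qed
  have reidx: "(\<Sum>f\<in>S. A (f \<circ> r)) = (\<Sum>f\<in>S. A f)"
  proof (rule sum.reindex_bij_witness[where i="\<lambda>f. f \<circ> inv r" and j="\<lambda>f. f \<circ> r"])
    fix f assume f: "f \<in> S"
    show "f \<circ> r \<circ> inv r = f" using permutes_inv_o[OF rp] by (simp add: o_assoc[symmetric])
    show "f \<circ> inv r \<circ> r = f" using permutes_inv_o[OF rp] by (simp add: o_assoc[symmetric])
    have fF: "f \<in> F" using f by (simp add: S_def)
    show "f \<circ> r \<in> S"
      using f PiE_comp_perm[OF fF[unfolded F_def] rp] card_fiber_perm[OF rp, of f]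
      by (simp add: S_def F_def cnt_def)
    show "f \<circ> inv r \<in> S"
      using f PiE_comp_perm[OF fF[unfolded F_def] permutes_inv[OF rp]] card_fiber_perm[OF permutes_inv[OF rp], of f]
      by (simp add: S_def F_def cnt_def)
    show "A (f \<circ> r) = A (f \<circ> r)" ..
  qed
  have "(\<Sum>f\<in>S. A f) = (\<Sum>f\<in>S. A (f \<circ> r) * c)" by (rule sum.cong[OF refl]) (rule Af)
  also have "\<dots> = c * (\<Sum>f\<in>S. A (f \<circ> r))" by (simp add: sum_distrib_left mult.commute)
  also have "\<dots> = c * (\<Sum>f\<in>S. A f)" using reidx by simp
  finally have "amp n {..<n} t = c * amp n {..<n} t" unfolding amp_eq .
  moreover have "c \<noteq> 1"
  proof
    assume "c = 1"
    then have "omega n ^ \<phi> = 1" by (simp add: c_def power_inverse)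
    then have "n dvd \<phi>" using omega_pow_eq_1[OF n] by simp
    then show False using nv by (simp add: valid_pattern_def \<phi>_def)
  qed
  ultimately show ?thesis by (metis mult_cancel_right2)
qed

lemma suppression_prob:
  assumes n: "n \<ge> 1" and t: "t \<in> patterns n n" and nv: "\<not> valid_pattern n t"
  shows "prob_ident n {..<n} t = 0"
  using suppression[OF assms] by (simp add: prob_ident_def)



lemma modlem:
  assumes "r < (n::nat)" "x < n"
  shows "(r + x) mod n = 0 \<longleftrightarrow> x = (n - r) mod n"
proof (cases "r = 0")
  case True then show ?thesis using assms by simp
next
  case False
  have nr: "(n - r) mod n = n - r" using False assms by simp
  show ?thesis
  proof (cases "r + x < n")
    case True then show ?thesis using nr False by simp
  next
    case False
    then have "(r + x) mod n = r + x - n" using assms by (simp add: le_mod_geq)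
    then show ?thesis using nr False assms by auto
  qed
qed

lemma count_g:
  assumes n: "n \<ge> 1" and fin: "finite D" and d: "d \<in> D"
  shows "card {g \<in> D \<rightarrow>\<^sub>E {..<n}. (a + (\<Sum>j\<in>D. g j)) mod n = 0} = n ^ (card D - 1)"
proof -
  define D' where "D' = D - {d}"
  define v where "v = (\<lambda>h. (n - (a + (\<Sum>j\<in>D'. h j)) mod n) mod n)"
  define G where "G = {g \<in> D \<rightarrow>\<^sub>E {..<n}. (a + (\<Sum>j\<in>D. g j)) mod n = 0}"
  have finD': "finite D'" using fin by (simp add: D'_def)
  have dD': "d \<notin> D'" by (simp add: D'_def)
  have DD': "D = insert d D'" using d by (auto simp: D'_def)
  have sumD: "(\<Sum>j\<in>D. g j) = g d + (\<Sum>j\<in>D'. g j)" for g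
    using finD' dD' by (simp add: DD')
  have key: "(a + (\<Sum>j\<in>D. g j)) mod n = 0 \<longleftrightarrow> g d = v g" if "g d < n" for g
  proof -
    have "(a + (\<Sum>j\<in>D. g j)) mod n = ((a + (\<Sum>j\<in>D'. g j)) mod n + g d) mod n"
      by (simp add: sumD mod_add_left_eq mod_add_right_eq add_ac)
    also have "\<dots> = 0 \<longleftrightarrow> g d = v g"
      unfolding v_def by (rule modlem) (use n that in auto)
    finally show ?thesis by (simp add: v_def)
  qed
  have vlt: "v h < n" for h using n by (simp add: v_def)
  have sumD'_upd: "(\<Sum>j\<in>D'. (h(d := x)) j) = (\<Sum>j\<in>D'. h j)" for h x
    by (rule sum.cong) (use dD' in auto)
  have "bij_betw (\<lambda>g. restrict g D') G (D' \<rightarrow>\<^sub>E {..<n})"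
  proof (rule bij_betw_byWitness[where f'="\<lambda>h. h(d := v h)"])
    show "\<forall>g\<in>G. (restrict g D')(d := v (restrict g D')) = g"
    proof
      fix g assume g: "g \<in> G"
      have gd: "g d < n" using g d by (auto simp: G_def)
      have "v (restrict g D') = v g" by (simp add: v_def)
      also have "\<dots> = g d" using key[of g, OF gd] g by (simp add: G_def)
      finally have vv: "v (restrict g D') = g d" .
      show "(restrict g D')(d := v (restrict g D')) = g"
      proof
        fix x show "((restrict g D')(d := v (restrict g D'))) x = g x"
          using g vv by (cases "x = d") (auto simp: G_def D'_def PiE_iff extensional_def)
      qed
    qed
    show "\<forall>h\<in>D' \<rightarrow>\<^sub>E {..<n}. restrict (h(d := v h)) D' = h"
    proof
      fix h assume h: "h \<in> D' \<rightarrow>\<^sub>E {..<n}"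
      show "restrict (h(d := v h)) D' = h"
      proof
        fix x show "restrict (h(d := v h)) D' x = h x"
          using h dD' by (cases "x \<in> D'") (auto simp: PiE_iff extensional_def)
      qed
    qed
    show "(\<lambda>g. restrict g D') ` G \<subseteq> D' \<rightarrow>\<^sub>E {..<n}"
      using DD' by (auto simp: G_def restrict_PiE_iff PiE_iff)
    show "(\<lambda>h. h(d := v h)) ` (D' \<rightarrow>\<^sub>E {..<n}) \<subseteq> G"
    proof
      fix g assume "g \<in> (\<lambda>h. h(d := v h)) ` (D' \<rightarrow>\<^sub>E {..<n})"
      then obtain h where h: "h \<in> D' \<rightarrow>\<^sub>E {..<n}" and g: "g = h(d := v h)" by blast
      have gPi: "g \<in> D \<rightarrow>\<^sub>E {..<n}"
        using h vlt[of h] d by (auto simp: g PiE_iff extensional_def D'_def)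
      have "g d = v g"
        using sumD'_upd[of h "v h"] by (simp add: g v_def)
      then have "(a + (\<Sum>j\<in>D. g j)) mod n = 0" using key[of g] vlt[of h] by (simp add: g)
      then show "g \<in> G" using gPi by (simp add: G_def)
    qed
  qed
  then have "card G = card (D' \<rightarrow>\<^sub>E {..<n})" by (rule bij_betw_same_card)
  also have "\<dots> = n ^ card D'" using finD' by (simp add: card_PiE)
  also have "card D' = card D - 1" using d fin by (simp add: D'_def)
  finally show ?thesis by (simp add: G_def)
qed

lemma finite_patterns: "finite (patterns n m)"
proof -
  have "patterns n m \<subseteq> {t. \<forall>x. (x \<in> {..<n} \<longrightarrow> t x \<in> {..m}) \<and> (x \<notin> {..<n} \<longrightarrow> t x = 0)}"
  proof
    fix t assume t: "t \<in> patterns n m"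
    have "t x \<le> m" if "x < n" for x
    proof -
      have "t x \<le> (\<Sum>k<n. t k)" using that by (intro member_le_sum) auto
      then show ?thesis using t by (simp add: patterns_def)
    qed
    then show "t \<in> {t. \<forall>x. (x \<in> {..<n} \<longrightarrow> t x \<in> {..m}) \<and> (x \<notin> {..<n} \<longrightarrow> t x = 0)}"
      using t by (auto simp: patterns_def)
  qed
  then show ?thesis by (rule finite_subset) (rule finite_set_of_finite_funs, auto)
qed



lemma shift_sum:
  assumes n: "n \<ge> 1" and I: "I \<subseteq> {..<n}" and g: "g \<in> ({..<n} - I) \<rightarrow>\<^sub>E {..<n}"
  shows "(\<Sum>s\<in>{s\<in>patterns n n. valid_pattern n s}.
            (if \<forall>k<n. cnt ({..<n} - I) g k \<le> s k then prob_ident n I (\<lambda>k. s k - cnt ({..<n} - I) g k) else 0))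
       = (\<Sum>t\<in>patterns n (card I).
            if ((\<Sum>i<n. i * t i) + (\<Sum>j\<in>{..<n} - I. g j)) mod n = 0 then prob_ident n I t else 0)"
proof -
  define D where "D = {..<n} - I"
  define c where "c = cnt D g"
  define SV where "SV = {s\<in>patterns n n. valid_pattern n s}"
  define P where "P = patterns n (card I)"
  define cond where "cond = (\<lambda>t. ((\<Sum>i<n. i * t i) + (\<Sum>j\<in>D. g j)) mod n = 0)"
  have finD: "finite D" by (simp add: D_def)
  have finI: "finite I" using I finite_subset by blast
  have im: "g ` D \<subseteq> {..<n}" using g by (auto simp: D_def)
  have c0: "c k = 0" if "n \<le> k" for k using cnt_out[OF im that] by (simp add: c_def)
  have csum: "(\<Sum>k<n. c k) = card D" using cnt_sum[OF finD im] by (simp add: c_def)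
  have cwsum: "(\<Sum>k<n. k * c k) = (\<Sum>j\<in>D. g j)" using cnt_wsum[OF finD im] by (simp add: c_def)
  have cardD: "card D = n - card I" using I finI by (simp add: D_def card_Diff_subset)
  have cardI: "card I \<le> n" using I by (metis card_lessThan card_mono finite_lessThan)
  have "(\<Sum>s\<in>SV. (if \<forall>k<n. c k \<le> s k then prob_ident n I (\<lambda>k. s k - c k) else 0))
      = (\<Sum>s\<in>{s\<in>SV. \<forall>k<n. c k \<le> s k}. prob_ident n I (\<lambda>k. s k - c k))"
    by (rule sum.inter_filter[symmetric]) (simp add: SV_def finite_patterns)
  also have "\<dots> = (\<Sum>t\<in>{t\<in>P. cond t}. prob_ident n I t)"
  proof (rule sum.reindex_bij_witness[where j="\<lambda>s k. s k - c k" and i="\<lambda>t k. t k + c k"])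
    fix s assume s: "s \<in> {s\<in>SV. \<forall>k<n. c k \<le> s k}"
    have s0: "s k = 0" if "n \<le> k" for k using s that by (auto simp: SV_def patterns_def)
    have ssum: "(\<Sum>k<n. s k) = n" using s by (simp add: SV_def patterns_def)
    have sle: "\<forall>k\<in>{..<n}. c k \<le> s k" using s by simp
    show "(\<lambda>k. (s k - c k) + c k) = s"
    proof
      fix k show "s k - c k + c k = s k"
        using sle c0[of k] by (cases "k < n") auto
    qed
    show "(\<lambda>k. s k - c k) \<in> {t\<in>P. cond t}"
    proof -
      have "(\<Sum>k<n. s k - c k) = card I"
        using sum_subtractf_nat[of "{..<n}" c s] sle ssum csum cardD cardI by simp
      moreover have "(\<lambda>k. s k - c k) k = 0" if "\<not> k < n" for k using s0 that by simp
      moreover have "(\<Sum>i<n. i * (s i - c i)) + (\<Sum>j\<in>D. g j) = (\<Sum>i<n. i * s i)"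
      proof -
        have "(\<Sum>i<n. i * (s i - c i)) + (\<Sum>i<n. i * c i) = (\<Sum>i<n. i * (s i - c i) + i * c i)"
          by (simp add: sum.distrib)
        also have "\<dots> = (\<Sum>i<n. i * s i)"
          by (rule sum.cong[OF refl]) (use sle in \<open>simp add: diff_mult_distrib2 le_add_diff_inverse2\<close>)
        finally show ?thesis using cwsum by simp
      qed
      moreover have "valid_pattern n s" using s by (simp add: SV_def)
      ultimately show ?thesis
        by (auto simp: P_def patterns_def cond_def valid_pattern_def) (meson leD)
    qed
  next
    fix t assume t: "t \<in> {t\<in>P. cond t}"
    have t0: "t k = 0" if "n \<le> k" for k using t that by (auto simp: P_def patterns_def)
    have tsum: "(\<Sum>k<n. t k) = card I" using t by (simp add: P_def patterns_def)
    show "(\<lambda>k. (t k + c k) - c k) = t" by simp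
    show "(\<lambda>k. t k + c k) \<in> {s\<in>SV. \<forall>k<n. c k \<le> s k}"
    proof -
      have "(\<Sum>k<n. t k + c k) = n" using tsum csum cardD cardI by (simp add: sum.distrib)
      moreover have "t k + c k = 0" if "\<not> k < n" for k using t0 c0 that by simp
      moreover have "(\<Sum>i<n. i * (t i + c i)) = (\<Sum>i<n. i * t i) + (\<Sum>j\<in>D. g j)"
        using cwsum by (simp add: distrib_left sum.distrib)
      ultimately show ?thesis using t
        by (auto simp: SV_def patterns_def cond_def valid_pattern_def) (metis less_irrefl)+
    qed
  next
    fix s show "prob_ident n I (\<lambda>k. s k - c k) = prob_ident n I (\<lambda>k. s k - c k)" ..
  qed
  also have "\<dots> = (\<Sum>t\<in>P. if cond t then prob_ident n I t else 0)"
    by (rule sum.inter_filter) (simp add: P_def finite_patterns)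
  finally show ?thesis unfolding SV_def c_def D_def P_def cond_def .
qed



lemma sum_if_card: "finite A \<Longrightarrow> (\<Sum>g\<in>A. if Q g then (x::real) else 0) = real (card {g\<in>A. Q g}) * x"
  by (simp add: sum.inter_filter[symmetric])

lemma V_lemma:
  assumes n: "n \<ge> 1" and I: "I \<subseteq> {..<n}"
  shows "(\<Sum>s\<in>{s\<in>patterns n n. valid_pattern n s}. prob_pattern n I s) = (if I = {..<n} then 1 else 1 / real n)"
proof -
  define D where "D = {..<n} - I"
  define G where "G = D \<rightarrow>\<^sub>E {..<n}"
  define SV where "SV = {s\<in>patterns n n. valid_pattern n s}"
  define P where "P = patterns n (card I)"
  define p where "p = prob_ident n I"
  define \<phi> where "\<phi> = (\<lambda>t. \<Sum>i<n. i * t i)"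
  define N where "N = (\<lambda>t. card {g\<in>G. (\<phi> t + (\<Sum>j\<in>D. g j)) mod n = 0})"
  define ind where "ind = (\<lambda>g s. if \<forall>k<n. cnt D g k \<le> s k then p (\<lambda>k. s k - cnt D g k) else 0)"
  have finG: "finite G" by (simp add: G_def D_def finite_PiE)
  have finSV: "finite SV" by (simp add: SV_def finite_patterns)
  have finP: "finite P" by (simp add: P_def finite_patterns)
  have pp: "prob_pattern n I s = (\<Sum>g\<in>G. (1 / real n) ^ card D * ind g s)" for s
    by (simp add: prob_pattern_def Let_def cmod_fourier_sq D_def G_def p_def ind_def cong: if_cong)
  have "(\<Sum>s\<in>SV. prob_pattern n I s) = (\<Sum>s\<in>SV. \<Sum>g\<in>G. (1 / real n) ^ card D * ind g s)"
    by (simp add: pp)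
  also have "\<dots> = (\<Sum>g\<in>G. \<Sum>s\<in>SV. (1 / real n) ^ card D * ind g s)"
    by (rule sum.swap)
  also have "\<dots> = (\<Sum>g\<in>G. (1 / real n) ^ card D *
                     (\<Sum>t\<in>P. if (\<phi> t + (\<Sum>j\<in>D. g j)) mod n = 0 then p t else 0))"
  proof (rule sum.cong[OF refl])
    fix g assume g: "g \<in> G"
    have "(\<Sum>s\<in>SV. ind g s) = (\<Sum>t\<in>P. if (\<phi> t + (\<Sum>j\<in>D. g j)) mod n = 0 then p t else 0)"
      using shift_sum[OF n I g[unfolded G_def D_def]]
      unfolding SV_def P_def ind_def p_def \<phi>_def D_def .
    then show "(\<Sum>s\<in>SV. (1 / real n) ^ card D * ind g s) =
        (1 / real n) ^ card D * (\<Sum>t\<in>P. if (\<phi> t + (\<Sum>j\<in>D. g j)) mod n = 0 then p t else 0)"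
      unfolding sum_distrib_left[symmetric] by simp
  qed
  also have "\<dots> = (1 / real n) ^ card D *
                   (\<Sum>t\<in>P. \<Sum>g\<in>G. if (\<phi> t + (\<Sum>j\<in>D. g j)) mod n = 0 then p t else 0)"
    by (simp add: sum_distrib_left sum.swap[of _ G P])
  also have "\<dots> = (1 / real n) ^ card D * (\<Sum>t\<in>P. real (N t) * p t)"
    by (simp add: sum_if_card[OF finG] N_def)
  finally have main: "(\<Sum>s\<in>SV. prob_pattern n I s) = (1 / real n) ^ card D * (\<Sum>t\<in>P. real (N t) * p t)" .
  have normP: "(\<Sum>t\<in>P. p t) = 1" using norm_ident[OF n I] by (simp add: P_def p_def)
  show ?thesis
  proof (cases "I = {..<n}")
    case True
    then have D0: "D = {}" by (simp add: D_def)
    have PP: "P = patterns n n" using True by (simp add: P_def)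
    have "(\<Sum>t\<in>P. real (N t) * p t) = (\<Sum>t\<in>P. p t)"
    proof (rule sum.cong[OF refl])
      fix t assume t: "t \<in> P"
      have "N t = (if \<phi> t mod n = 0 then 1 else 0)"
        by (simp add: N_def G_def D0)
      moreover have "p t = 0" if "\<phi> t mod n \<noteq> 0"
        using suppression_prob[OF n, of t] t that True by (simp add: PP p_def valid_pattern_def \<phi>_def)
      ultimately show "real (N t) * p t = p t" by auto
    qed
    then show ?thesis using main normP D0 True by (simp add: SV_def)
  next
    case False
    then obtain d where d: "d \<in> D" using I by (auto simp: D_def)
    have finD: "finite D" by (simp add: D_def)
    have "N t = n ^ (card D - 1)" for t
      unfolding N_def G_def by (rule count_g[OF n finD d])
    then have "(\<Sum>t\<in>P. real (N t) * p t) = real n ^ (card D - 1)"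
      using normP by (simp add: sum_distrib_left[symmetric])
    moreover obtain e where e: "card D = Suc e" using d finD by (metis card_0_eq empty_iff not0_implies_Suc)
    moreover have "(1 / real n) ^ Suc e * real n ^ e = 1 / real n"
    proof -
      have a: "(1 / real n) ^ e * real n ^ e = ((1 / real n) * real n) ^ e"
        by (simp only: power_mult_distrib)
      have b: "((1 / real n) * real n) ^ e = 1" using n by simp
      have "(1 / real n) ^ Suc e * real n ^ e = (1 / real n) * ((1 / real n) ^ e * real n ^ e)"
        by (simp only: power_Suc mult.assoc)
      then show ?thesis using a b by simp
    qed
    ultimately show ?thesis using main False by (simp add: SV_def)
  qed
qed

theorem corollary1:
  fixes n :: nat and eps :: real
  assumes "n \<ge> 1" and "0 \<le> eps" and "eps \<le> 1"
  shows "prob_valid_OBB n eps = (1 - 1 / real n) * (1 - eps) ^ n + 1 / real n"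
proof -
  define A where "A = {..<n}"
  define w where "w = (\<lambda>I::nat set. (1 - eps) ^ card I * eps ^ (n - card I))"
  have finA: "finite A" by (simp add: A_def)
  have "prob_valid_OBB n eps = (\<Sum>I\<in>Pow A. w I * (if I = A then 1 else 1 / real n))"
    unfolding prob_valid_OBB_def
    by (rule sum.cong) (use V_lemma[OF assms(1)] in \<open>auto simp: A_def w_def\<close>)
  also have "\<dots> = (\<Sum>I\<in>Pow A. w I / real n + (if I = A then w I * (1 - 1 / real n) else 0))"
    by (rule sum.cong[OF refl]) (auto simp: field_simps)
  also have "\<dots> = (\<Sum>I\<in>Pow A. w I) / real n + w A * (1 - 1 / real n)"
    using finA by (simp add: sum.distrib sum_divide_distrib)
  also have "(\<Sum>I\<in>Pow A. w I) = 1"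
  proof -
    have "(\<Sum>I\<in>Pow A. w I) = (\<Sum>X\<in>Pow A. (\<Prod>x\<in>X. 1 - eps) * (\<Prod>x\<in>A - X. eps))"
    proof (rule sum.cong[OF refl])
      fix X assume X: "X \<in> Pow A"
      then have "card (A - X) = n - card X" using finA by (simp add: card_Diff_subset finite_subset A_def)
      then show "w X = (\<Prod>x\<in>X. 1 - eps) * (\<Prod>x\<in>A - X. eps)" by (simp add: w_def)
    qed
    also have "\<dots> = (\<Prod>x\<in>A. (1 - eps) + eps)" by (rule prod_add[symmetric]) (rule finA)
    finally show ?thesis by simp
  qed
  also have "w A = (1 - eps) ^ n" by (simp add: w_def A_def)
  finally show ?thesis by (simp add: algebra_simps)
qed

end
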